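(* Let $A\in\mathcal{L}(\mathcal{H})$ be a bounded operator. Then $[A,\mathsf{E}_{\mathrm{can}}(\Theta)]=0$ for all Borel sets $\Theta\subseteq[0,2\pi)$ if and only if $A=cI$ for some $c\in\mathbb{C}$.
   Context: $\mathcal{H}\simeq L^2(\mathbb{R})$ is the Hilbert space of a single-mode field with orthonormal number basis $\{|n\rangle\}_{n\in\mathbb{N}}$, $\mathbb{N}=\{0,1,2,\dots\}$. The canonical phase observable is the POVM $\mathsf{E}_{\mathrm{can}}:\mathcal{B}([0,2\pi))\to\mathcal{L}(\mathcal{H})$ given (with weakly convergent sums) by $\mathsf{E}_{\mathrm{can}}(\Theta)=\sum_{m,n=0}^\infty \frac{1}{2\pi}\int_\Theta e^{i(m-n)\theta}\,d\theta\,|m\rangle\langle n|$. *)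

theory Defs
  imports "HOL-Analysis.Analysis"
begin

text \<open>The single-mode Hilbert space H is modelled concretely as l^2(N): vectors are
  coordinate functions (coefficients in the number basis |n>) that are square-summable.\<close>

definition l2 :: "(nat \<Rightarrow> complex) set" where
  "l2 = {x. summable (\<lambda>n. (cmod (x n))\<^sup>2)}"

definition l2_norm :: "(nat \<Rightarrow> complex) \<Rightarrow> real" where
  "l2_norm x = sqrt (\<Sum>n. (cmod (x n))\<^sup>2)"

definition bounded_op :: "((nat \<Rightarrow> complex) \<Rightarrow> (nat \<Rightarrow> complex)) \<Rightarrow> bool" where
  "bounded_op A \<longleftrightarrow>
     (\<forall>x\<in>l2. A x \<in> l2) \<and>
     (\<forall>x\<in>l2. \<forall>y\<in>l2. \<forall>a b. A (\<lambda>n. a * x n + b * y n) = (\<lambda>n. a * A x n + b * A y n)) \<and>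
     (\<exists>C. \<forall>x\<in>l2. l2_norm (A x) \<le> C * l2_norm x)"

text \<open>Matrix elements of the canonical phase POVM:
  <m| E_can(Theta) |n> = (1/(2 pi)) int_Theta exp(i (m-n) theta) d theta.\<close>

definition can_phase_coeff :: "real set \<Rightarrow> int \<Rightarrow> complex" where
  "can_phase_coeff \<Theta> k =
     complex_of_real (1 / (2 * pi)) *
       (LINT \<theta>:\<Theta>|lborel. exp (\<i> * of_int k * complex_of_real \<theta>))"

text \<open>Action of E_can(Theta) on a vector x in l2: the m-th coordinate is
  sum_n <m|E_can(Theta)|n> x_n (absolutely convergent for x in l2).\<close>

definition E_can :: "real set \<Rightarrow> (nat \<Rightarrow> complex) \<Rightarrow> (nat \<Rightarrow> complex)" where
  "E_can \<Theta> x = (\<lambda>m. \<Sum>n. can_phase_coeff \<Theta> (int m - int n) * x n)"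

end

theory Submission imports Defs begin
definition ee :: "int \<Rightarrow> real \<Rightarrow> complex" where
  "ee l t = exp (\<i> * of_int l * complex_of_real t)"

lemma ee_deriv: "(ee l has_vector_derivative (\<i> * of_int l * ee l t)) (at t within T)"
proof -
  have "((\<lambda>t. exp (t *\<^sub>R (\<i> * of_int l))) has_vector_derivative exp (t *\<^sub>R (\<i> * of_int l)) * (\<i> * of_int l)) (at t within T)"
    by (rule exp_scaleR_has_vector_derivative_right)
  moreover have "(\<lambda>t. exp (t *\<^sub>R (\<i> * of_int l))) = ee l"
    by (auto simp: ee_def scaleR_conv_of_real mult_ac)
  ultimately show ?thesis by (simp add: ee_def scaleR_conv_of_real mult_ac)
qed

lemma ee_cont: "continuous_on S (ee l)"
  unfolding ee_def by (intro continuous_intros)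

lemma ee_0[simp]: "ee 0 t = 1" by (simp add: ee_def)
lemma ee_mult: "ee a t * ee b t = ee (a+b) t"
  by (simp add: ee_def exp_add[symmetric] algebra_simps)
lemma ee_cnj: "cnj (ee a t) = ee (-a) t"
  by (simp add: ee_def exp_cnj)

lemma int_ee_Icc:
  assumes "a \<le> b"
  shows "(LINT t:{a..b}|lborel. ee l t) =
    (if l = 0 then complex_of_real (b-a) else (ee l b - ee l a) / (\<i> * of_int l))"
proof (cases "l = 0")
  case True
  then show ?thesis using assms by (simp add: set_integral_const scaleR_conv_of_real)
next
  case False
  have "(LBINT t=a..b. ee l t) = (LINT t:{a..b}|lborel. ee l t)"
    using assms by (rule interval_integral_Icc)
  moreover have "(LBINT t=a..b. ee l t) = ee l b / (\<i> * of_int l) - ee l a / (\<i> * of_int l)"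
  proof (rule interval_integral_FTC_finite)
    show "continuous_on {min a b..max a b} (ee l)" by (rule ee_cont)
    fix x
    have "((\<lambda>t. ee l t * (1 / (\<i> * of_int l))) has_vector_derivative
        (\<i> * of_int l * ee l x) * (1 / (\<i> * of_int l))) (at x within {min a b..max a b})"
      by (intro has_vector_derivative_mult_left ee_deriv)
    then show "((\<lambda>t. ee l t / (\<i> * of_int l)) has_vector_derivative ee l x) (at x within {min a b..max a b})"
      using False by simp
  qed
  ultimately show ?thesis using False by (simp add: diff_divide_distrib)
qed

lemma sint:
  fixes f :: "real \<Rightarrow> complex"
  assumes "continuous_on {0..2*pi} f" "S \<in> sets borel" "S \<subseteq> {0..2*pi}"
  shows "set_integrable lborel S f"
  using set_integrable_subset[of lborel "{0..2*pi}" f S] borel_integrable_compact[OF _ assms(1)] assms(2,3)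
  by (auto simp: set_integrable_def)

lemma set_integral_sum':
  fixes f :: "'i \<Rightarrow> 'a \<Rightarrow> complex"
  assumes "finite I" "\<And>i. i \<in> I \<Longrightarrow> set_integrable M A (f i)"
  shows "(LINT x:A|M. (\<Sum>i\<in>I. f i x)) = (\<Sum>i\<in>I. LINT x:A|M. f i x)"
proof -
  have "(\<lambda>x. indicator A x *\<^sub>R (\<Sum>i\<in>I. f i x)) = (\<lambda>x. \<Sum>i\<in>I. indicator A x *\<^sub>R f i x)"
    by (simp only: scaleR_sum_right)
  then show ?thesis unfolding set_lebesgue_integral_def
    apply (simp only:)
    apply (rule Bochner_Integration.integral_sum)
    using assms by (simp add: set_integrable_def)
qed

lemma int_ee_K: "(LINT t:{0..2*pi}|lborel. ee l t) = (if l = 0 then complex_of_real (2*pi) else 0)"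
proof -
  have "ee l (2*pi) = 1"
    by (simp add: ee_def exp_eq_1)
  then show ?thesis using int_ee_Icc[of 0 "2*pi" l] by (simp add: ee_def)
qed

lemma ee_cont'[continuous_intros]: "continuous_on S f \<Longrightarrow> continuous_on S (\<lambda>x. ee l (f x))"
  unfolding ee_def by (intro continuous_intros)

lemma ee_prod_cnj: "b * ee p t * cnj (c * ee q t) = (b * cnj c) * ee (p - q) t"
proof -
  have "b * ee p t * cnj (c * ee q t) = (b * cnj c) * (ee p t * ee (-q) t)"
    by (simp add: ee_cnj mult_ac)
  also have "\<dots> = (b * cnj c) * ee (p - q) t" by (simp add: ee_mult)
  finally show ?thesis .
qed

lemma ee_times_cnj: "ee p t * cnj (ee q t) = ee (p - q) t"
  using ee_prod_cnj[of 1 p t 1 q] by simp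

lemma sum_inj_delta:
  assumes "finite J" "inj_on \<phi> J" "j \<in> J"
  shows "(\<Sum>k\<in>J. if \<phi> j = \<phi> k then f k else (0::'a::comm_monoid_add)) = f j"
proof -
  have "(\<Sum>k\<in>J. if \<phi> j = \<phi> k then f k else 0) = (\<Sum>k\<in>J. if j = k then f k else 0)"
    using assms by (intro sum.cong refl) (auto dest: inj_onD)
  then show ?thesis using assms by simp
qed

lemma orth:
  fixes b :: "'j \<Rightarrow> complex" and \<phi> :: "'j \<Rightarrow> int"
  assumes "finite J" "inj_on \<phi> J"
  shows "(LINT t:{0..2*pi}|lborel. (\<Sum>j\<in>J. b j * ee (\<phi> j) t) * cnj (\<Sum>j\<in>J. b j * ee (\<phi> j) t))
     = complex_of_real (2*pi * (\<Sum>j\<in>J. (cmod (b j))^2))"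
proof -
  have pt: "(\<Sum>j\<in>J. b j * ee (\<phi> j) t) * cnj (\<Sum>j\<in>J. b j * ee (\<phi> j) t) =
      (\<Sum>j\<in>J. \<Sum>k\<in>J. (b j * cnj (b k)) * ee (\<phi> j - \<phi> k) t)" for t
    unfolding sum_product cnj_sum by (intro sum.cong refl) (simp add: ee_prod_cnj ee_times_cnj)
  have "(LINT t:{0..2*pi}|lborel. (\<Sum>j\<in>J. \<Sum>k\<in>J. (b j * cnj (b k)) * ee (\<phi> j - \<phi> k) t))
     = (\<Sum>j\<in>J. \<Sum>k\<in>J. (b j * cnj (b k)) * (LINT t:{0..2*pi}|lborel. ee (\<phi> j - \<phi> k) t))"
    using assms(1)
    by (simp add: set_integral_sum' sint continuous_intros ee_cont)
  also have "\<dots> = (\<Sum>j\<in>J. \<Sum>k\<in>J. if \<phi> j = \<phi> k then (b j * cnj (b k)) * complex_of_real (2*pi) else 0)"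
    by (intro sum.cong refl) (simp add: int_ee_K)
  also have "\<dots> = (\<Sum>j\<in>J. (b j * cnj (b j)) * complex_of_real (2*pi))"
    using assms by (intro sum.cong refl) (rule sum_inj_delta[where f="\<lambda>k. _ * cnj (b k) * _"])
  also have "\<dots> = complex_of_real (2*pi * (\<Sum>j\<in>J. (cmod (b j))^2))"
    by (simp add: complex_norm_square[symmetric] sum_distrib_left mult_ac)
  finally show ?thesis by (simp only: pt)
qed

lemma ind_K:
  fixes f :: "real \<Rightarrow> complex"
  assumes "\<Theta> \<in> sets borel" "\<Theta> \<subseteq> {0..2*pi}" "continuous_on {0..2*pi} f"
  shows "set_integrable lborel {0..2*pi} (\<lambda>t. indicator \<Theta> t * f t)"
    and "(LINT t:{0..2*pi}|lborel. indicator \<Theta> t * f t) = (LINT t:\<Theta>|lborel. f t)"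
proof -
  have eq: "(\<lambda>t. indicator {0..2*pi} t *\<^sub>R (indicator \<Theta> t * f t)) = (\<lambda>t. indicator \<Theta> t *\<^sub>R f t)"
    using assms(2) by (auto simp: indicator_def fun_eq_iff)
  have "set_integrable lborel \<Theta> f" using assms by (intro sint)
  then show "set_integrable lborel {0..2*pi} (\<lambda>t. indicator \<Theta> t * f t)"
    unfolding set_integrable_def eq .
  show "(LINT t:{0..2*pi}|lborel. indicator \<Theta> t * f t) = (LINT t:\<Theta>|lborel. f t)"
    unfolding set_lebesgue_integral_def eq ..
qed

lemma set_integral_cnj:
  "(LINT x:A|M. cnj (f x)) = cnj (LINT x:A|M. f x)"
proof -
  have "(\<lambda>x. indicator A x *\<^sub>R cnj (f x)) = (\<lambda>x. cnj (indicator A x *\<^sub>R f x))"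
    by (auto simp: indicator_def fun_eq_iff)
  then show ?thesis unfolding set_lebesgue_integral_def
    by (simp only:) (rule Bochner_Integration.integral_cnj)
qed

lemma set_integral_nonneg_real:
  fixes f :: "real \<Rightarrow> real"
  assumes "\<And>x. 0 \<le> f x"
  shows "0 \<le> (LINT x:A|lborel. f x)"
  unfolding set_lebesgue_integral_def using assms
  by (intro integral_nonneg_AE) (auto simp: indicator_def)

lemma bessel:
  fixes P :: "real \<Rightarrow> complex" and J :: "int set"
  assumes \<Theta>: "\<Theta> \<in> sets borel" "\<Theta> \<subseteq> {0..2*pi}" and P: "continuous_on {0..2*pi} P"
    and J: "finite J"
  shows "(\<Sum>j\<in>J. (cmod ((LINT t:\<Theta>|lborel. P t * ee j t) / of_real (2*pi)))^2)
     \<le> (LINT t:\<Theta>|lborel. (cmod (P t))^2) / (2*pi)"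
proof -
  define F where "F j = (LINT t:\<Theta>|lborel. P t * ee j t) / of_real (2*pi)" for j
  define S where "S = (\<Sum>j\<in>J. (cmod (F j))^2)"
  define g where "g t = (\<Sum>j\<in>J. F j * ee (-j) t)" for t
  have gc: "continuous_on {0..2*pi} g" unfolding g_def by (intro continuous_intros)
  define h where "h t = indicator \<Theta> t * P t - g t" for t
  have hh: "h t * cnj (h t) = indicator \<Theta> t * (P t * cnj (P t)) - indicator \<Theta> t * (P t * cnj (g t))
      - indicator \<Theta> t * (g t * cnj (P t)) + g t * cnj (g t)" for t
    by (cases "t \<in> \<Theta>") (simp_all add: h_def algebra_simps)
  have I1: "(LINT t:\<Theta>|lborel. P t * cnj (P t)) = of_real (LINT t:\<Theta>|lborel. (cmod (P t))^2)"
  proof -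
    have "(\<lambda>t. P t * cnj (P t)) = (\<lambda>t. complex_of_real ((cmod (P t))^2))"
      by (simp only: complex_norm_square)
    then show ?thesis by (simp only: set_integral_complex_of_real)
  qed
  have PF: "(LINT t:\<Theta>|lborel. P t * ee j t) = of_real (2*pi) * F j" for j
    by (simp add: F_def)
  have cg: "P t * cnj (g t) = (\<Sum>j\<in>J. cnj (F j) * (P t * ee j t))" for t
    by (simp add: g_def sum_distrib_left ee_cnj mult_ac)
  have I2: "(LINT t:\<Theta>|lborel. P t * cnj (g t)) = of_real (2*pi*S)"
  proof -
    have "(LINT t:\<Theta>|lborel. P t * cnj (g t)) = (\<Sum>j\<in>J. cnj (F j) * (LINT t:\<Theta>|lborel. P t * ee j t))"
      unfolding cg using J \<Theta> P
      by (simp add: set_integral_sum' sint continuous_intros)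
    also have "\<dots> = (\<Sum>j\<in>J. of_real (2*pi) * (F j * cnj (F j)))"
      by (simp add: PF mult_ac)
    also have "\<dots> = of_real (2*pi*S)"
      by (simp add: S_def complex_norm_square[symmetric] sum_distrib_left)
    finally show ?thesis .
  qed
  have I3: "(LINT t:\<Theta>|lborel. g t * cnj (P t)) = of_real (2*pi*S)"
  proof -
    have "(LINT t:\<Theta>|lborel. g t * cnj (P t)) = (LINT t:\<Theta>|lborel. cnj (P t * cnj (g t)))"
      by (simp add: mult.commute)
    also have "\<dots> = of_real (2*pi*S)" by (simp only: set_integral_cnj I2) simp
    finally show ?thesis .
  qed
  have I4: "(LINT t:{0..2*pi}|lborel. g t * cnj (g t)) = of_real (2*pi*S)"
    unfolding g_def S_def using J by (subst orth) (auto simp: inj_on_def)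
  have int1: "set_integrable lborel {0..2*pi} (\<lambda>t. indicator \<Theta> t * (P t * cnj (P t)))"
    and int2: "set_integrable lborel {0..2*pi} (\<lambda>t. indicator \<Theta> t * (P t * cnj (g t)))"
    and int3: "set_integrable lborel {0..2*pi} (\<lambda>t. indicator \<Theta> t * (g t * cnj (P t)))"
    using \<Theta> P gc by (auto intro!: ind_K continuous_intros)
  have int4: "set_integrable lborel {0..2*pi} (\<lambda>t. g t * cnj (g t))"
    using gc by (auto intro!: sint continuous_intros)
  have "(LINT t:{0..2*pi}|lborel. h t * cnj (h t)) =
     (LINT t:{0..2*pi}|lborel. indicator \<Theta> t * (P t * cnj (P t)))
     - (LINT t:{0..2*pi}|lborel. indicator \<Theta> t * (P t * cnj (g t)))
     - (LINT t:{0..2*pi}|lborel. indicator \<Theta> t * (g t * cnj (P t)))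
     + (LINT t:{0..2*pi}|lborel. g t * cnj (g t))"
    unfolding hh using int1 int2 int3 int4 by simp
  also have "\<dots> = of_real (LINT t:\<Theta>|lborel. (cmod (P t))^2) - of_real (2*pi*S)"
    using \<Theta> P gc by (simp add: ind_K(2) continuous_intros I1 I2 I3 I4)
  finally have eq: "(LINT t:{0..2*pi}|lborel. h t * cnj (h t)) =
      of_real ((LINT t:\<Theta>|lborel. (cmod (P t))^2) - 2*pi*S)" by simp
  have "(LINT t:{0..2*pi}|lborel. h t * cnj (h t)) = of_real (LINT t:{0..2*pi}|lborel. (cmod (h t))^2)"
  proof -
    have "(\<lambda>t. h t * cnj (h t)) = (\<lambda>t. complex_of_real ((cmod (h t))^2))"
      by (simp only: complex_norm_square)
    then show ?thesis by (simp only: set_integral_complex_of_real)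
  qed
  with eq have "(LINT t:\<Theta>|lborel. (cmod (P t))^2) - 2*pi*S = (LINT t:{0..2*pi}|lborel. (cmod (h t))^2)"
    by (simp only: of_real_eq_iff)
  moreover have "0 \<le> (LINT t:{0..2*pi}|lborel. (cmod (h t))^2)"
    by (rule set_integral_nonneg_real) simp
  ultimately have "2*pi*S \<le> (LINT t:\<Theta>|lborel. (cmod (P t))^2)" by linarith
  then show ?thesis unfolding S_def F_def by (simp add: field_simps)
qed

abbreviation adm :: "real set \<Rightarrow> bool" where
  "adm \<Theta> \<equiv> \<Theta> \<in> sets borel \<and> \<Theta> \<subseteq> {0..<2*pi}"

lemma cpc: "can_phase_coeff \<Theta> k = (LINT t:\<Theta>|lborel. ee k t) / of_real (2*pi)"
  unfolding can_phase_coeff_def ee_def[abs_def] by (simp add: field_simps)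

lemma int_mono_set:
  fixes f :: "real \<Rightarrow> real"
  assumes "continuous_on {0..2*pi} f" "\<And>t. 0 \<le> f t" "\<Theta> \<in> sets borel" "\<Theta> \<subseteq> {0..2*pi}"
  shows "(LINT t:\<Theta>|lborel. f t) \<le> (LINT t:{0..2*pi}|lborel. f t)"
proof -
  have iK: "integrable lborel (\<lambda>t. indicator {0..2*pi} t *\<^sub>R f t)"
    using borel_integrable_compact[OF _ assms(1)] by simp
  then have "set_integrable lborel \<Theta> f"
    using set_integrable_subset[of lborel "{0..2*pi}" f \<Theta>] assms(3,4) by (auto simp: set_integrable_def)
  then show ?thesis unfolding set_lebesgue_integral_def set_integrable_def
    using iK assms(2,4) by (intro integral_mono) (auto simp: indicator_def)
qed

lemma coeff_bessel:
  assumes "adm \<Theta>" "finite J"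
  shows "(\<Sum>j\<in>J. (cmod (can_phase_coeff \<Theta> j))^2) \<le> 1"
proof -
  have sub: "\<Theta> \<subseteq> {0..2*pi}" using assms by auto
  have "(\<Sum>j\<in>J. (cmod (can_phase_coeff \<Theta> j))^2) \<le> (LINT t:\<Theta>|lborel. (cmod (1::complex))^2) / (2*pi)"
    using bessel[of \<Theta> "\<lambda>_. 1" J] assms sub by (simp add: cpc)
  also have "\<dots> \<le> (LINT t:{0..2*pi}|lborel. (cmod (1::complex))^2) / (2*pi)"
    using int_mono_set[of "\<lambda>_. (cmod (1::complex))^2" \<Theta>] assms sub
    by (intro divide_right_mono) auto
  also have "\<dots> = 1" by (simp add: set_integral_const)
  finally show ?thesis .
qed

lemma summable_coeff:
  assumes "adm \<Theta>" "inj \<phi>"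
  shows "summable (\<lambda>n. (cmod (can_phase_coeff \<Theta> (\<phi> n)))^2)"
proof (rule bounded_imp_summable)
  fix n
  have "(\<Sum>k\<le>n. (cmod (can_phase_coeff \<Theta> (\<phi> k)))^2) = (\<Sum>j\<in>\<phi> ` {..n}. (cmod (can_phase_coeff \<Theta> j))^2)"
    using assms(2) by (simp add: sum.reindex inj_on_def inj_def)
  also have "\<dots> \<le> 1" using assms by (intro coeff_bessel) auto
  finally show "(\<Sum>k\<le>n. (cmod (can_phase_coeff \<Theta> (\<phi> k)))^2) \<le> 1" .
qed simp

lemma summable_prod_l2:
  fixes a b :: "nat \<Rightarrow> complex"
  assumes "summable (\<lambda>n. (cmod (a n))^2)" "summable (\<lambda>n. (cmod (b n))^2)"
  shows "summable (\<lambda>n. norm (a n * b n))" "summable (\<lambda>n. a n * b n)"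
proof -
  have le: "norm (norm (a n * b n)) \<le> ((cmod (a n))^2 + (cmod (b n))^2) / 2" for n
    using sum_squares_bound[of "cmod (a n)" "cmod (b n)"] by (simp add: norm_mult)
  show s: "summable (\<lambda>n. norm (a n * b n))"
    by (rule summable_comparison_test[OF _ summable_divide[OF summable_add[OF assms], of 2]]) (use le in auto)
  then show "summable (\<lambda>n. a n * b n)" by (rule summable_norm_cancel)
qed

lemma summable_E:
  assumes "adm \<Theta>" "x \<in> l2"
  shows "summable (\<lambda>n. can_phase_coeff \<Theta> (int m - int n) * x n)"
proof -
  have "inj (\<lambda>n::nat. int m - int n)" by (auto simp: inj_def)
  then show ?thesis using summable_coeff[OF assms(1)] assms(2)
    by (intro summable_prod_l2(2)) (auto simp: l2_def)
qed

lemma int_normsq_K: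
  fixes b :: "'j \<Rightarrow> complex" and \<phi> :: "'j \<Rightarrow> int"
  assumes "finite J" "inj_on \<phi> J"
  shows "(LINT t:{0..2*pi}|lborel. (cmod (\<Sum>j\<in>J. b j * ee (\<phi> j) t))^2) = 2*pi * (\<Sum>j\<in>J. (cmod (b j))^2)"
proof -
  have "(\<lambda>t. (\<Sum>j\<in>J. b j * ee (\<phi> j) t) * cnj (\<Sum>j\<in>J. b j * ee (\<phi> j) t))
      = (\<lambda>t. complex_of_real ((cmod (\<Sum>j\<in>J. b j * ee (\<phi> j) t))^2))"
    by (simp only: complex_norm_square)
  then have "complex_of_real (LINT t:{0..2*pi}|lborel. (cmod (\<Sum>j\<in>J. b j * ee (\<phi> j) t))^2)
     = complex_of_real (2*pi * (\<Sum>j\<in>J. (cmod (b j))^2))"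
    using orth[OF assms, of b] by (simp only: set_integral_complex_of_real)
  then show ?thesis by (simp only: of_real_eq_iff)
qed

lemma E_fin_bound:
  assumes "adm \<Theta>" "finite M"
  shows "(\<Sum>m\<in>M. (cmod (\<Sum>n<K0. can_phase_coeff \<Theta> (int m - int n) * x n))^2)
     \<le> (\<Sum>n<K0. (cmod (x n))^2)"
proof -
  have sub: "\<Theta> \<subseteq> {0..2*pi}" "\<Theta> \<in> sets borel" using assms by auto
  define P where "P t = (\<Sum>n<K0. x n * ee (- int n) t)" for t
  have Pc: "continuous_on {0..2*pi} P" unfolding P_def by (intro continuous_intros)
  have F: "(LINT t:\<Theta>|lborel. P t * ee j t) / of_real (2*pi)
      = (\<Sum>n<K0. can_phase_coeff \<Theta> (j - int n) * x n)" for j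
  proof -
    have "(\<lambda>t. P t * ee j t) = (\<lambda>t. \<Sum>n<K0. x n * ee (j - int n) t)"
      by (simp add: P_def sum_distrib_right mult.assoc ee_mult)
    then have "(LINT t:\<Theta>|lborel. P t * ee j t) = (\<Sum>n<K0. x n * (LINT t:\<Theta>|lborel. ee (j - int n) t))"
      using sub by (simp add: set_integral_sum' sint ee_cont)
    then show ?thesis by (simp add: cpc sum_divide_distrib mult_ac)
  qed
  have "(\<Sum>m\<in>M. (cmod (\<Sum>n<K0. can_phase_coeff \<Theta> (int m - int n) * x n))^2)
      = (\<Sum>m\<in>M. (cmod ((LINT t:\<Theta>|lborel. P t * ee (int m) t) / of_real (2*pi)))^2)"
    by (simp only: F)
  also have "\<dots> = (\<Sum>j\<in>int ` M. (cmod ((LINT t:\<Theta>|lborel. P t * ee j t) / of_real (2*pi)))^2)"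
    by (rule sum.reindex[symmetric, unfolded comp_def]) (simp add: inj_on_def)
  also have "\<dots> \<le> (LINT t:\<Theta>|lborel. (cmod (P t))^2) / (2*pi)"
    using sub Pc assms(2) by (intro bessel) auto
  also have "\<dots> \<le> (LINT t:{0..2*pi}|lborel. (cmod (P t))^2) / (2*pi)"
    using sub Pc by (intro divide_right_mono int_mono_set continuous_intros) auto
  also have "\<dots> = (\<Sum>n<K0. (cmod (x n))^2)"
    unfolding P_def by (subst int_normsq_K) (auto simp: inj_on_def)
  finally show ?thesis .
qed

lemma E_l2:
  assumes "adm \<Theta>" "x \<in> l2"
  shows "E_can \<Theta> x \<in> l2"
proof -
  have sx: "summable (\<lambda>n. (cmod (x n))^2)" using assms(2) by (simp add: l2_def)
  have bound: "(\<Sum>m\<in>M. (cmod (E_can \<Theta> x m))^2) \<le> (\<Sum>n. (cmod (x n))^2)" if M: "finite M" for M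
  proof -
    have lim: "(\<lambda>K. \<Sum>m\<in>M. (cmod (\<Sum>n<K. can_phase_coeff \<Theta> (int m - int n) * x n))^2)
        \<longlonglongrightarrow> (\<Sum>m\<in>M. (cmod (E_can \<Theta> x m))^2)"
      unfolding E_can_def
      by (intro tendsto_intros summable_LIMSEQ summable_E assms)
    show ?thesis
    proof (rule LIMSEQ_le_const2[OF lim], intro exI allI impI)
      fix K
      have "(\<Sum>m\<in>M. (cmod (\<Sum>n<K. can_phase_coeff \<Theta> (int m - int n) * x n))^2) \<le> (\<Sum>n<K. (cmod (x n))^2)"
        using assms(1) M by (rule E_fin_bound)
      also have "\<dots> \<le> (\<Sum>n. (cmod (x n))^2)"
        using sx by (intro sum_le_suminf) auto
      finally show "(\<Sum>m\<in>M. (cmod (\<Sum>n<K. can_phase_coeff \<Theta> (int m - int n) * x n))^2) \<le> (\<Sum>n. (cmod (x n))^2)" .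
    qed
  qed
  have "summable (\<lambda>m. (cmod (E_can \<Theta> x m))^2)"
    by (rule bounded_imp_summable[OF _ bound]) auto
  then show ?thesis by (simp add: l2_def)
qed

lemma E_scale:
  assumes "adm \<Theta>" "x \<in> l2"
  shows "E_can \<Theta> (\<lambda>n. c * x n) = (\<lambda>m. c * E_can \<Theta> x m)"
  unfolding E_can_def
  using suminf_mult[OF summable_E[OF assms], of c] by (simp add: mult_ac)

lemma backward:
  assumes "\<forall>x\<in>l2. A x = (\<lambda>n. c * x n)" "adm \<Theta>" "x \<in> l2"
  shows "A (E_can \<Theta> x) = E_can \<Theta> (A x)"
  using assms E_l2[OF assms(2,3)] E_scale[OF assms(2,3)] by simp



lemma l2_lin:
  assumes "x \<in> l2" "y \<in> l2"
  shows "(\<lambda>n. a * x n + b * y n) \<in> l2"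
proof -
  have le: "norm ((cmod (a * x n + b * y n))^2) \<le> 2 * (cmod a)^2 * (cmod (x n))^2 + 2 * (cmod b)^2 * (cmod (y n))^2" for n
  proof -
    have t: "cmod (a * x n + b * y n) \<le> cmod a * cmod (x n) + cmod b * cmod (y n)"
      using norm_triangle_ineq[of "a * x n" "b * y n"] by (simp add: norm_mult)
    have "(cmod (a * x n + b * y n))^2 \<le> (cmod a * cmod (x n) + cmod b * cmod (y n))^2"
      using t by (intro power_mono) auto
    also have "\<dots> \<le> 2 * (cmod a)^2 * (cmod (x n))^2 + 2 * (cmod b)^2 * (cmod (y n))^2"
      using sum_squares_bound[of "cmod a * cmod (x n)" "cmod b * cmod (y n)"]
      by (simp add: power2_eq_square algebra_simps)
    finally show ?thesis by simp
  qed
  have s: "summable (\<lambda>n. 2 * (cmod a)^2 * (cmod (x n))^2 + 2 * (cmod b)^2 * (cmod (y n))^2)"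
    using assms unfolding l2_def by (intro summable_add summable_mult) auto
  have "summable (\<lambda>n. (cmod (a * x n + b * y n))^2)"
    by (rule summable_comparison_test[OF _ s]) (use le in blast)
  then show ?thesis unfolding l2_def by simp
qed

lemma l2_finite_support:
  assumes "finite S" "\<And>n. n \<notin> S \<Longrightarrow> x n = 0"
  shows "x \<in> l2"
  unfolding l2_def using assms by (auto intro!: summable_finite[of S])

lemma l2_zero: "(\<lambda>n. 0) \<in> l2"
  by (rule l2_finite_support[of "{}"]) auto

lemma A_lin:
  assumes "bounded_op A" "x \<in> l2" "y \<in> l2"
  shows "A (\<lambda>n. a * x n + b * y n) = (\<lambda>n. a * A x n + b * A y n)"
  using assms unfolding bounded_op_def by blast

lemma A_l2: "bounded_op A \<Longrightarrow> x \<in> l2 \<Longrightarrow> A x \<in> l2"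
  unfolding bounded_op_def by blast

lemma A_zero:
  assumes "bounded_op A"
  shows "A (\<lambda>n. 0) = (\<lambda>n. 0)"
  using A_lin[OF assms l2_zero l2_zero, of 0 0] by simp

lemma A_sum:
  assumes A: "bounded_op A" and I: "finite I" and v: "\<And>i. i \<in> I \<Longrightarrow> v i \<in> l2"
  shows "(\<lambda>k. \<Sum>i\<in>I. w i * v i k) \<in> l2 \<and> A (\<lambda>k. \<Sum>i\<in>I. w i * v i k) = (\<lambda>k. \<Sum>i\<in>I. w i * A (v i) k)"
  using I v
proof (induction I rule: finite_induct)
  case empty
  then show ?case using A_zero[OF A] l2_zero by simp
next
  case (insert i I)
  then have IH: "(\<lambda>k. \<Sum>i\<in>I. w i * v i k) \<in> l2"
    "A (\<lambda>k. \<Sum>i\<in>I. w i * v i k) = (\<lambda>k. \<Sum>i\<in>I. w i * A (v i) k)" by auto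
  have vi: "v i \<in> l2" using insert by auto
  have eq: "(\<lambda>k. \<Sum>i\<in>insert i I. w i * v i k) = (\<lambda>k. w i * v i k + 1 * (\<Sum>i\<in>I. w i * v i k))"
    using insert by simp
  show ?case
  proof
    show "(\<lambda>k. \<Sum>i\<in>insert i I. w i * v i k) \<in> l2"
      unfolding eq by (rule l2_lin[OF vi IH(1)])
    have "A (\<lambda>k. \<Sum>i\<in>insert i I. w i * v i k) = (\<lambda>n. w i * A (v i) n + 1 * A (\<lambda>k. \<Sum>i\<in>I. w i * v i k) n)"
      unfolding eq by (rule A_lin[OF A vi IH(1)])
    also have "\<dots> = (\<lambda>k. \<Sum>i\<in>insert i I. w i * A (v i) k)"
      using insert.hyps by (simp add: IH(2))
    finally show "A (\<lambda>k. \<Sum>i\<in>insert i I. w i * v i k) = (\<lambda>k. \<Sum>i\<in>insert i I. w i * A (v i) k)" .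
  qed
qed

lemma coord_le_norm:
  assumes "z \<in> l2"
  shows "cmod (z m) \<le> l2_norm z"
proof -
  have "(\<Sum>n\<in>{m}. (cmod (z n))^2) \<le> (\<Sum>n. (cmod (z n))^2)"
    by (rule sum_le_suminf) (use assms in \<open>auto simp: l2_def\<close>)
  then show ?thesis unfolding l2_norm_def by (simp add: real_le_rsqrt)
qed

lemma A_coord_bound:
  assumes "bounded_op A"
  obtains C where "\<And>z m. z \<in> l2 \<Longrightarrow> cmod (A z m) \<le> C * sqrt (\<Sum>n. (cmod (z n))^2)"
proof -
  obtain C where C: "\<forall>x\<in>l2. l2_norm (A x) \<le> C * l2_norm x"
    using assms unfolding bounded_op_def by blast
  have "cmod (A z m) \<le> C * sqrt (\<Sum>n. (cmod (z n))^2)" if z: "z \<in> l2" for z m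
  proof -
    have "cmod (A z m) \<le> l2_norm (A z)" by (rule coord_le_norm[OF A_l2[OF assms z]])
    also have "\<dots> \<le> C * l2_norm z" using C z by blast
    finally show ?thesis unfolding l2_norm_def .
  qed
  then show ?thesis using that by blast
qed


lemma ee_add_arg: "ee l (s + t) = ee l s * ee l t"
  by (simp add: ee_def exp_add[symmetric] algebra_simps)

lemma ee_pow: "ee l (real r * t) = (ee l t) ^ r"
proof -
  have "ee l (real r * t) = exp (of_nat r * (\<i> * of_int l * complex_of_real t))"
    by (simp add: ee_def mult_ac)
  then show ?thesis by (simp add: exp_of_nat_mult ee_def)
qed

lemma ee_eq_1_iff: "ee l t = 1 \<longleftrightarrow> (\<exists>n::int. l * t = 2 * n * pi)"
  by (simp add: ee_def exp_eq_1)

lemma ee_root_eq_1: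
  assumes "N > 0"
  shows "ee k (2*pi/N) = 1 \<longleftrightarrow> int N dvd k"
proof -
  have "(\<exists>n::int. k * (2*pi/N) = 2 * n * pi) \<longleftrightarrow> (\<exists>n::int. k = int N * n)"
  proof
    assume "\<exists>n::int. k * (2*pi/N) = 2 * n * pi"
    then obtain n :: int where "k * (2*pi/N) = 2 * n * pi" by blast
    then have "real_of_int k * (2*pi) = 2 * real_of_int n * pi * real N"
      using assms by (simp add: divide_simps)
    then have "real_of_int k = real N * real_of_int n" by simp
    then have "k = int N * n" by (metis of_int_eq_iff of_int_mult of_int_of_nat_eq)
    then show "\<exists>n::int. k = int N * n" by blast
  next
    assume "\<exists>n::int. k = int N * n"
    then obtain n where "k = int N * n" by blast
    then have "k * (2*pi/N) = 2 * n * pi" using assms by simp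
    then show "\<exists>n::int. k * (2*pi/N) = 2 * n * pi" by blast
  qed
  then show ?thesis by (simp only: ee_eq_1_iff dvd_def)
qed

lemma root_sum:
  assumes "N > 0"
  shows "(\<Sum>r<N. ee k (2*pi*real r/real N)) = (if int N dvd k then of_nat N else 0)"
proof -
  define z where "z = ee k (2*pi/N)"
  have pw: "ee k (2*pi*real r/real N) = z ^ r" for r
    unfolding z_def using ee_pow[of k r "2*pi/N"] by (simp add: mult_ac)
  show ?thesis
  proof (cases "int N dvd k")
    case True
    then have "z = 1" using ee_root_eq_1[OF assms] by (simp add: z_def)
    then show ?thesis using True by (simp add: pw)
  next
    case False
    then have z1: "z \<noteq> 1" using ee_root_eq_1[OF assms] by (simp add: z_def)
    have e1: "ee k (2*pi) = 1" unfolding ee_eq_1_iff by (rule exI[of _ k]) simp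
    have "z ^ N = ee k (2*pi)" using pw[of N] assms by simp
    with e1 have "z ^ N = 1" by simp
    then show ?thesis using False z1 by (simp add: pw geometric_sum)
  qed
qed

lemma int_ee_Ico:
  assumes "a \<le> b"
  shows "(LINT t:{a..<b}|lborel. ee l t) = (LINT t:{a..b}|lborel. ee l t)"
proof (rule set_integral_cong_set)
  show "set_borel_measurable lborel {a..b} (ee l)" "set_borel_measurable lborel {a..<b} (ee l)"
    unfolding set_borel_measurable_def ee_def by measurable
  show "AE x in lborel. (x \<in> {a..b}) = (x \<in> {a..<b})"
    using AE_lborel_singleton[of b] by eventually_elim auto
qed

lemma coeff_arc:
  assumes "a \<le> b"
  shows "can_phase_coeff {a..<b} j =
    (if j = 0 then complex_of_real (b-a) else (ee j b - ee j a) / (\<i> * of_int j)) / of_real (2*pi)"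
  using assms by (simp add: cpc int_ee_Ico int_ee_Icc)

definition sN :: "nat \<Rightarrow> int \<Rightarrow> int \<Rightarrow> complex" where
  "sN N p j = (if int N dvd (j - p) then 1 / of_int j else 0)"

definition kap :: "nat \<Rightarrow> int \<Rightarrow> complex" where
  "kap N p = of_nat N * (ee p (2*pi/N) - 1) / (2 * of_real pi * \<i>)"

definition arcN :: "nat \<Rightarrow> nat \<Rightarrow> real set" where
  "arcN N r = {2*pi*real r/real N ..< 2*pi*real (Suc r)/real N}"

lemma arcN_adm:
  assumes "r < N"
  shows "arcN N r \<in> sets borel \<and> arcN N r \<subseteq> {0..<2*pi}"
proof -
  have "real (Suc r) \<le> real N" using assms by simp
  then have "2*pi*real (Suc r)/real N \<le> 2*pi" using assms
    by (simp add: divide_simps)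
  moreover have "0 \<le> 2*pi*real r/real N" by simp
  ultimately show ?thesis unfolding arcN_def by auto
qed

lemma kap_nz:
  assumes "N > 0" "\<not> int N dvd p"
  shows "kap N p \<noteq> 0"
  using assms ee_root_eq_1[OF assms(1), of p] by (simp add: kap_def)

lemma comb_coeff:
  assumes N: "N > 0" and p: "\<not> int N dvd p"
  shows "(\<Sum>r<N. ee (-p) (2*pi*real r/real N) * can_phase_coeff (arcN N r) j) = kap N p * sN N p j"
proof -
  define \<alpha> where "\<alpha> r = 2*pi*real r/real N" for r
  have le: "\<alpha> r \<le> \<alpha> (Suc r)" for r unfolding \<alpha>_def using N by (simp add: divide_simps)
  have aS: "\<alpha> (Suc r) = \<alpha> r + 2*pi/N" for r unfolding \<alpha>_def using N by (simp add: field_simps)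
  have arc: "arcN N r = {\<alpha> r..<\<alpha> (Suc r)}" for r unfolding arcN_def \<alpha>_def ..
  show ?thesis
  proof (cases "j = 0")
    case True
    have "ee (-p) (\<alpha> r) * can_phase_coeff (arcN N r) j = ee (-p) (\<alpha> r) * (1 / of_nat N)" for r
      using True N by (simp only: arc coeff_arc[OF le]) (simp add: aS field_simps)
    then have "(\<Sum>r<N. ee (-p) (\<alpha> r) * can_phase_coeff (arcN N r) j) = (\<Sum>r<N. ee (-p) (\<alpha> r)) * (1 / of_nat N)"
      by (simp add: sum_divide_distrib)
    also have "\<dots> = 0" unfolding \<alpha>_def using root_sum[OF N, of "-p"] p by simp
    finally show ?thesis using True p by (simp add: sN_def \<alpha>_def)
  next
    case False
    define q where "q = (ee j (2*pi/N) - 1) / (\<i> * of_int j) / of_real (2*pi)"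
    have t: "ee (-p) (\<alpha> r) * can_phase_coeff (arcN N r) j = ee (j - p) (\<alpha> r) * q" for r
    proof -
      have "ee (-p) (\<alpha> r) * can_phase_coeff (arcN N r) j
          = ee (-p) (\<alpha> r) * ((ee j (\<alpha> r) * ee j (2*pi/N) - ee j (\<alpha> r)) / (\<i> * of_int j) / of_real (2*pi))"
        using False by (simp only: arc coeff_arc[OF le]) (simp add: aS ee_add_arg)
      also have "\<dots> = (ee (-p) (\<alpha> r) * ee j (\<alpha> r)) * q"
        unfolding q_def by (simp add: field_simps)
      also have "\<dots> = ee (j - p) (\<alpha> r) * q" by (simp add: ee_mult)
      finally show ?thesis .
    qed
    have "(\<Sum>r<N. ee (-p) (\<alpha> r) * can_phase_coeff (arcN N r) j) = (\<Sum>r<N. ee (j - p) (\<alpha> r)) * q"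
      by (simp add: t sum_distrib_right)
    also have "\<dots> = (if int N dvd (j - p) then of_nat N else 0) * q"
      unfolding \<alpha>_def using root_sum[OF N] by simp
    also have "\<dots> = kap N p * sN N p j"
    proof (cases "int N dvd (j - p)")
      case True
      then have "ee (j - p) (2*pi/N) = 1" using ee_root_eq_1[OF N] by simp
      then have "ee j (2*pi/N) = ee p (2*pi/N)"
        using ee_mult[of "j - p" "2*pi/N" p] by simp
      then show ?thesis using True False unfolding q_def kap_def sN_def
        by (simp add: field_simps)
    qed (simp add: sN_def)
    finally show ?thesis unfolding \<alpha>_def .
  qed
qed


lemma inv_sq_summable: "summable (\<lambda>k::nat. 1 / (real_of_int (int k - c))^2)"
proof (rule summable_comparison_test_ev)
  show "summable (\<lambda>k::nat. 4 * inverse (real k ^ 2))"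
    by (intro summable_mult inverse_power_summable) auto
  have "\<forall>\<^sub>F k in sequentially. real k \<ge> 2 * \<bar>real_of_int c\<bar> + 1"
    by real_asymp
  then show "\<forall>\<^sub>F k in sequentially. norm (1 / (real_of_int (int k - c))^2) \<le> 4 * inverse (real k ^ 2)"
  proof eventually_elim
    case (elim k)
    have pos: "real k / 2 \<le> real k - real_of_int c" "0 < real k" using elim by auto
    have "(real k / 2)^2 \<le> (real k - real_of_int c)^2"
      using pos by (intro power_mono) auto
    then have "1 / (real k - real_of_int c)^2 \<le> 1 / (real k / 2)^2"
      using pos by (intro divide_left_mono) auto
    moreover have "norm (1 / (real_of_int (int k - c))^2) = 1 / (real k - real_of_int c)^2" by simp
    moreover have "1 / (real k / 2)^2 = 4 * inverse (real k ^ 2)" by (simp add: field_simps)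
    ultimately show ?case by simp
  qed
qed



definition tN :: "nat \<Rightarrow> int \<Rightarrow> int \<Rightarrow> complex" where
  "tN N p j = (if int N dvd (j - p) \<and> j \<noteq> p then 1 / of_int j else 0)"

lemma sN_split: "sN N p j = (if j = p then 1 / of_int p else 0) + tN N p j"
  by (simp add: sN_def tN_def)

lemma tN_sq_le: "(cmod (tN N p j))^2 \<le> 1 / (real_of_int j)^2"
  by (auto simp: tN_def norm_divide power_divide)

lemma tN_ev0: "eventually (\<lambda>N. tN N p j = 0) sequentially"
proof (cases "j = p")
  case True
  then show ?thesis by (simp add: tN_def)
next
  case False
  have "eventually (\<lambda>N. N > nat \<bar>j - p\<bar>) sequentially" by (rule eventually_gt_at_top)
  then show ?thesis
  proof eventually_elim
    case (elim N)
    have "\<not> int N dvd (j - p)"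
    proof
      assume "int N dvd (j - p)"
      then have "\<bar>int N\<bar> \<le> \<bar>j - p\<bar>" using False by (intro dvd_imp_le_int) auto
      with elim show False by simp
    qed
    then show ?case by (simp add: tN_def)
  qed
qed

lemma tN_sq_le': "(cmod (tN N p (int k - int n)))^2 \<le> 1 / (real k - real n)^2"
  using tN_sq_le[of N p "int k - int n"] by simp

lemma inv_sq_summable': "summable (\<lambda>k::nat. 1 / (real k - real n)^2)"
  "summable (\<lambda>k::nat. 1 / (real n - real k)^2)"
  using inv_sq_summable[of "int n"] by (simp_all add: power2_commute)

lemma sq_shift: "(real_of_int (int m - int l))^2 = (real_of_int (int l - int m))^2"
  by (simp add: power2_commute)

lemma tN_l2: "(\<lambda>k. tN N p (int k - int n)) \<in> l2"
  unfolding l2_def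
  by (rule CollectI, rule summable_comparison_test[OF _ inv_sq_summable'(1)[of n]])
     (use tN_sq_le' in auto)

lemma tN_sq_summable: "summable (\<lambda>l. (cmod (tN N p (int m - int l)))^2)"
  by (rule summable_comparison_test[OF _ inv_sq_summable'(2)[of m]])
     (use tN_sq_le' in \<open>auto intro!: exI[of _ 0]\<close>)

lemma tN_lim1: "(\<lambda>N. \<Sum>k. (cmod (tN N p (int k - int n)))^2) \<longlonglongrightarrow> 0"
proof -
  have "eventually (\<lambda>N. summable (\<lambda>k. norm ((cmod (tN N p (int k - int n)))^2))) sequentially \<and>
        summable (\<lambda>k. norm ((\<lambda>k. 0::real) k)) \<and>
        ((\<lambda>N. \<Sum>k. (cmod (tN N p (int k - int n)))^2) \<longlonglongrightarrow> (\<Sum>k. (0::real)))"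
  proof (rule tannerys_theorem[where M = "\<lambda>k. 1 / (real_of_int (int k - int n))^2"])
    fix k
    show "(\<lambda>N. (cmod (tN N p (int k - int n)))^2) \<longlonglongrightarrow> 0"
      by (rule tendsto_eventually) (use tN_ev0[of p "int k - int n"] in \<open>eventually_elim, simp\<close>)
  next
    show "\<forall>\<^sub>F (k, N) in sequentially \<times>\<^sub>F sequentially. norm ((cmod (tN N p (int k - int n)))^2) \<le> 1 / (real_of_int (int k - int n))^2"
      by (rule always_eventually) (auto simp: tN_sq_le')
  qed (auto intro: inv_sq_summable inv_sq_summable')
  then show ?thesis by simp
qed

lemma tN_lim2:
  assumes "a \<in> l2"
  shows "(\<lambda>N. \<Sum>l. tN N p (int m - int l) * a l) \<longlonglongrightarrow> 0"
proof -
  define M where "M l = (1 / (real_of_int (int m - int l))^2 + (cmod (a l))^2) / 2" for l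
  have sM: "summable M" unfolding M_def
    using assms inv_sq_summable'(2)[of m]
    by (intro summable_divide summable_add) (auto simp: l2_def)
  have bnd: "norm (tN N p (int m - int l) * a l) \<le> M l" for N l
  proof -
    have "norm (tN N p (int m - int l) * a l) \<le> ((cmod (tN N p (int m - int l)))^2 + (cmod (a l))^2) / 2"
      using sum_squares_bound[of "cmod (tN N p (int m - int l))" "cmod (a l)"] by (simp add: norm_mult)
    also have "\<dots> \<le> M l" unfolding M_def using tN_sq_le[of N p "int m - int l"] by simp
    finally show ?thesis .
  qed
  have "eventually (\<lambda>N. summable (\<lambda>l. norm (tN N p (int m - int l) * a l))) sequentially \<and>
        summable (\<lambda>l. norm ((\<lambda>l. 0::complex) l)) \<and>
        ((\<lambda>N. \<Sum>l. tN N p (int m - int l) * a l) \<longlonglongrightarrow> (\<Sum>l. (0::complex)))"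
  proof (rule tannerys_theorem[where M = M])
    fix l
    show "(\<lambda>N. tN N p (int m - int l) * a l) \<longlonglongrightarrow> 0"
      by (rule tendsto_eventually) (use tN_ev0[of p "int m - int l"] in \<open>eventually_elim, simp\<close>)
  next
    show "\<forall>\<^sub>F (l, N) in sequentially \<times>\<^sub>F sequentially. norm (tN N p (int m - int l) * a l) \<le> M l"
      by (rule always_eventually) (auto simp: bnd)
  qed (auto intro: sM)
  then show ?thesis by simp
qed



definition en :: "nat \<Rightarrow> nat \<Rightarrow> complex" where
  "en n = (\<lambda>k. if k = n then 1 else 0)"

lemma en_l2: "en n \<in> l2"
  by (rule l2_finite_support[of "{n}"]) (auto simp: en_def)

lemma E_en: "E_can \<Theta> (en n) = (\<lambda>k. can_phase_coeff \<Theta> (int k - int n))"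
proof
  fix k
  have "(\<lambda>l. can_phase_coeff \<Theta> (int k - int l) * en n l) = (\<lambda>l. if l = n then can_phase_coeff \<Theta> (int k - int l) else 0)"
    by (auto simp: en_def)
  then show "E_can \<Theta> (en n) k = can_phase_coeff \<Theta> (int k - int n)"
    unfolding E_can_def using sums_unique[OF sums_single[of n "\<lambda>l. can_phase_coeff \<Theta> (int k - int l)"]]
    by simp
qed

lemma A_null:
  assumes A: "bounded_op A" and T: "\<And>N. T N \<in> l2"
    and lim: "(\<lambda>N. \<Sum>k. (cmod (T N k))^2) \<longlonglongrightarrow> 0"
  shows "(\<lambda>N. A (T N) m) \<longlonglongrightarrow> 0"
proof -
  obtain C where C: "\<And>z m. z \<in> l2 \<Longrightarrow> cmod (A z m) \<le> C * sqrt (\<Sum>n. (cmod (z n))^2)"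
    using A_coord_bound[OF A] by blast
  have "(\<lambda>N. C * sqrt (\<Sum>k. (cmod (T N k))^2)) \<longlonglongrightarrow> C * sqrt 0"
    by (intro tendsto_intros lim)
  then have l0: "(\<lambda>N. C * sqrt (\<Sum>k. (cmod (T N k))^2)) \<longlonglongrightarrow> 0" by simp
  show ?thesis
    by (rule Lim_null_comparison[OF _ l0]) (use C T in auto)
qed

lemma const_null:
  fixes c :: complex
  assumes "f \<longlonglongrightarrow> 0" "eventually (\<lambda>N. c = f N) sequentially"
  shows "c = 0"
proof -
  have "(\<lambda>N. c) \<longlonglongrightarrow> 0"
    using assms(1) by (rule Lim_transform_eventually) (use assms(2) in \<open>eventually_elim, simp\<close>)
  then show ?thesis by (simp add: LIMSEQ_const_iff)
qed

lemma comb_identity: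
  assumes A: "bounded_op A"
    and H: "\<forall>\<Theta>. \<Theta> \<in> sets borel \<and> \<Theta> \<subseteq> {0..<2*pi} \<longrightarrow> (\<forall>x\<in>l2. A (E_can \<Theta> x) = E_can \<Theta> (A x))"
    and N: "N > 0" and p: "\<not> int N dvd p"
  shows "A (\<lambda>k. kap N p * sN N p (int k - int n)) m = (\<Sum>l. kap N p * sN N p (int m - int l) * A (en n) l)"
proof -
  define w where "w r = ee (-p) (2*pi*real r/real N)" for r
  define v where "v r = E_can (arcN N r) (en n)" for r
  define a where "a = A (en n)"
  have al2: "a \<in> l2" unfolding a_def by (rule A_l2[OF A en_l2])
  have adm: "adm (arcN N r)" if "r < N" for r using arcN_adm[OF that] by simp
  have vl2: "v r \<in> l2" if "r \<in> {..<N}" for r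
    unfolding v_def using adm[of r] that by (intro E_l2 en_l2) auto
  have vec: "(\<lambda>k. \<Sum>r<N. w r * v r k) = (\<lambda>k. kap N p * sN N p (int k - int n))"
    unfolding v_def w_def E_en using comb_coeff[OF N p] by simp
  have Av: "A (v r) = E_can (arcN N r) a" if "r < N" for r
    unfolding v_def a_def using H adm[OF that] en_l2 by blast
  have "A (\<lambda>k. kap N p * sN N p (int k - int n)) m = (\<Sum>r<N. w r * A (v r) m)"
  proof -
    have "A (\<lambda>k. \<Sum>r<N. w r * v r k) = (\<lambda>k. \<Sum>r<N. w r * A (v r) k)"
      using A_sum[OF A, of "{..<N}" v w] vl2 by blast
    then show ?thesis unfolding vec by simp
  qed
  also have "\<dots> = (\<Sum>r<N. w r * (\<Sum>l. can_phase_coeff (arcN N r) (int m - int l) * a l))"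
    by (intro sum.cong refl) (simp add: Av E_can_def)
  also have "\<dots> = (\<Sum>r<N. \<Sum>l. w r * (can_phase_coeff (arcN N r) (int m - int l) * a l))"
    by (intro sum.cong refl suminf_mult[symmetric] summable_E al2 adm) simp
  also have "\<dots> = (\<Sum>l. \<Sum>r<N. w r * (can_phase_coeff (arcN N r) (int m - int l) * a l))"
    by (rule suminf_sum[symmetric]) (intro summable_mult summable_E al2 adm, simp)
  also have "\<dots> = (\<Sum>l. kap N p * sN N p (int m - int l) * a l)"
  proof (rule arg_cong[where f=suminf], rule ext)
    fix l
    have "(\<Sum>r<N. w r * (can_phase_coeff (arcN N r) (int m - int l) * a l))
        = (\<Sum>r<N. w r * can_phase_coeff (arcN N r) (int m - int l)) * a l"
      by (simp add: sum_distrib_right sum_distrib_left mult_ac)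
    also have "\<dots> = kap N p * sN N p (int m - int l) * a l"
      unfolding w_def using comb_coeff[OF N p] by simp
    finally show "(\<Sum>r<N. w r * (can_phase_coeff (arcN N r) (int m - int l) * a l)) = kap N p * sN N p (int m - int l) * a l" .
  qed
  finally show ?thesis unfolding a_def .
qed



lemma alg_step:
  fixes kap X Y R S p :: complex
  assumes "kap \<noteq> 0" "p \<noteq> 0" "(kap / p) * X + kap * Y = (kap / p) * R + kap * S"
  shows "X - R = p * (S - Y)"
proof -
  have "kap * (X + p * Y) = kap * (R + p * S)"
    using assms by (simp add: field_simps)
  then have "X + p * Y = R + p * S" using assms(1) by simp
  then show ?thesis by (simp add: algebra_simps)
qed

lemma rel:
  assumes A: "bounded_op A"
    and H: "\<forall>\<Theta>. \<Theta> \<in> sets borel \<and> \<Theta> \<subseteq> {0..<2*pi} \<longrightarrow> (\<forall>x\<in>l2. A (E_can \<Theta> x) = E_can \<Theta> (A x))"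
    and p: "p \<noteq> 0"
  shows "A (\<lambda>k. if int k - int n = p then 1 else 0) m = (\<Sum>l. if int m - int l = p then A (en n) l else 0)"
proof -
  define \<delta> where "\<delta> = (\<lambda>k. if int k - int n = p then (1::complex) else 0)"
  define a where "a = A (en n)"
  define R where "R = (\<Sum>l. if int m - int l = p then a l else 0)"
  define T where "T N = (\<lambda>k. tN N p (int k - int n))" for N
  define S where "S N = (\<Sum>l. tN N p (int m - int l) * a l)" for N
  have al2: "a \<in> l2" unfolding a_def by (rule A_l2[OF A en_l2])
  have dl2: "\<delta> \<in> l2"
    by (rule l2_finite_support[of "{nat (int n + p)}"]) (auto simp: \<delta>_def)
  have Rs: "summable (\<lambda>l. if int m - int l = p then a l else 0)"
    by (rule summable_finite[of "{nat (int m - p)}"]) auto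
  have Ss: "summable (\<lambda>l. tN N p (int m - int l) * a l)" for N
    using tN_sq_summable al2 by (intro summable_prod_l2(2)) (auto simp: l2_def)
  have key: "A \<delta> m - R = of_int p * (S N - A (T N) m)" if N: "N > 0" and pN: "\<not> int N dvd p" for N
  proof -
    have pz: "(of_int p :: complex) \<noteq> 0" using p by simp
    have vec: "(\<lambda>k. kap N p * sN N p (int k - int n)) = (\<lambda>k. (kap N p / of_int p) * \<delta> k + kap N p * T N k)"
      by (auto simp: sN_split \<delta>_def T_def algebra_simps)
    have "A (\<lambda>k. kap N p * sN N p (int k - int n)) m = (kap N p / of_int p) * A \<delta> m + kap N p * A (T N) m"
      unfolding vec using A_lin[OF A dl2 tN_l2[of N p n], of "kap N p / of_int p" "kap N p"]
      by (simp add: T_def)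
    moreover have "(\<Sum>l. kap N p * sN N p (int m - int l) * a l)
        = (\<Sum>l. (kap N p / of_int p) * (if int m - int l = p then a l else 0) + kap N p * (tN N p (int m - int l) * a l))"
      by (rule arg_cong[where f=suminf]) (auto simp: sN_split algebra_simps)
    moreover have "\<dots> = (kap N p / of_int p) * R + kap N p * S N"
    proof -
      let ?c = "kap N p / of_int p" and ?d = "kap N p"
      have "(\<Sum>l. ?c * (if int m - int l = p then a l else 0) + ?d * (tN N p (int m - int l) * a l))
          = (\<Sum>l. ?c * (if int m - int l = p then a l else 0)) + (\<Sum>l. ?d * (tN N p (int m - int l) * a l))"
        by (rule suminf_add[symmetric]) (intro summable_mult Rs Ss)+
      also have "\<dots> = ?c * R + ?d * S N"
        unfolding R_def S_def by (simp only: suminf_mult[OF Rs] suminf_mult[OF Ss])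
      finally show ?thesis .
    qed
    ultimately have "(kap N p / of_int p) * A \<delta> m + kap N p * A (T N) m = (kap N p / of_int p) * R + kap N p * S N"
      using comb_identity[OF A H N pN, of n m] by (simp add: a_def)
    then show ?thesis by (rule alg_step[OF kap_nz[OF N pN] pz])
  qed
  have ev: "eventually (\<lambda>N. A \<delta> m - R = of_int p * (S N - A (T N) m)) sequentially"
  proof -
    have "eventually (\<lambda>N. N > nat \<bar>p\<bar>) sequentially" by (rule eventually_gt_at_top)
    then show ?thesis
    proof eventually_elim
      case (elim N)
      have "\<not> int N dvd p"
      proof
        assume "int N dvd p"
        then have "\<bar>int N\<bar> \<le> \<bar>p\<bar>" using p by (intro dvd_imp_le_int) auto
        with elim show False by simp
      qed
      moreover have "N > 0" using elim by simp
      ultimately show ?case by (intro key)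
    qed
  qed
  have lim: "(\<lambda>N. of_int p * (S N - A (T N) m)) \<longlonglongrightarrow> of_int p * (0 - 0)"
    unfolding S_def T_def
    by (intro tendsto_intros tN_lim2 al2 A_null[OF A] tN_l2 tN_lim1)
  have "A \<delta> m - R = 0"
    by (rule const_null[OF _ ev]) (use lim in simp)
  then show ?thesis unfolding \<delta>_def R_def a_def by simp
qed



lemma suminf_shift_single:
  "(\<Sum>l. if int m - int l = p then f l else (0::complex)) = (if p \<le> int m then f (nat (int m - p)) else 0)"
proof -
  have "(\<Sum>l. if int m - int l = p then f l else (0::complex)) =
      (\<Sum>l\<in>{nat (int m - p)}. if int m - int l = p then f l else 0)"
    by (rule suminf_finite) auto
  then show ?thesis by auto
qed

lemma diag:
  assumes A: "bounded_op A"
    and H: "\<forall>\<Theta>. \<Theta> \<in> sets borel \<and> \<Theta> \<subseteq> {0..<2*pi} \<longrightarrow> (\<forall>x\<in>l2. A (E_can \<Theta> x) = E_can \<Theta> (A x))"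
  shows "A (en n) m = A (en 0) 0 * en n m"
proof (induction n arbitrary: m)
  case 0
  show ?case
  proof (cases m)
    case 0
    then show ?thesis by (simp add: en_def)
  next
    case (Suc m')
    have "A (\<lambda>k. if int k - int 0 = -1 then 1 else 0) m' = (\<Sum>l. if int m' - int l = -1 then A (en 0) l else 0)"
      by (rule rel[OF A H]) simp
    moreover have "(\<lambda>k::nat. if int k - int 0 = -1 then (1::complex) else 0) = (\<lambda>k. 0)" by auto
    ultimately have "A (en 0) (Suc m') = 0"
      using A_zero[OF A] by (simp add: suminf_shift_single nat_add_distrib)
    then show ?thesis using Suc by (simp add: en_def)
  qed
next
  case (Suc n)
  have "A (\<lambda>k. if int k - int n = 1 then 1 else 0) m = (\<Sum>l. if int m - int l = 1 then A (en n) l else 0)"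
    by (rule rel[OF A H]) simp
  moreover have "(\<lambda>k::nat. if int k - int n = 1 then (1::complex) else 0) = en (Suc n)"
    by (auto simp: en_def)
  ultimately have "A (en (Suc n)) m = (if 1 \<le> int m then A (en n) (nat (int m - 1)) else 0)"
    by (simp add: suminf_shift_single)
  then show ?case using Suc.IH by (cases m) (auto simp: en_def)
qed

lemma forward:
  assumes A: "bounded_op A"
    and H: "\<forall>\<Theta>. \<Theta> \<in> sets borel \<and> \<Theta> \<subseteq> {0..<2*pi} \<longrightarrow> (\<forall>x\<in>l2. A (E_can \<Theta> x) = E_can \<Theta> (A x))"
    and x: "x \<in> l2"
  shows "A x = (\<lambda>m. A (en 0) 0 * x m)"
proof
  fix m
  define c where "c = A (en 0) 0"
  define xK where "xK K = (\<lambda>k. \<Sum>i<K. x i * en i k)" for K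
  define D where "D K = (\<lambda>k. 1 * x k + (-1) * xK K k)" for K
  have xKe: "xK K k = (if k < K then x k else 0)" for K k
  proof -
    have "(\<Sum>i<K. x i * en i k) = (\<Sum>i<K. if k = i then x i else 0)"
      by (intro sum.cong refl) (simp add: en_def)
    then show ?thesis unfolding xK_def by (simp add: sum.delta)
  qed
  have enl2: "\<And>i. i \<in> {..<K} \<Longrightarrow> en i \<in> l2" for K using en_l2 by blast
  have AxK: "A (xK K) = (\<lambda>k. c * xK K k)" and xKl2: "xK K \<in> l2" for K
  proof -
    have "xK K \<in> l2 \<and> A (xK K) = (\<lambda>k. \<Sum>i<K. x i * A (en i) k)"
      unfolding xK_def by (rule A_sum[OF A finite_lessThan enl2])
    moreover have "(\<lambda>k. \<Sum>i<K. x i * A (en i) k) = (\<lambda>k. c * xK K k)"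
    proof
      fix k
      have "(\<Sum>i<K. x i * A (en i) k) = (\<Sum>i<K. c * (x i * en i k))"
      proof (intro sum.cong refl)
        fix i
        have "A (en i) k = c * en i k" unfolding c_def by (rule diag[OF A H])
        then show "x i * A (en i) k = c * (x i * en i k)" by simp
      qed
      then show "(\<Sum>i<K. x i * A (en i) k) = c * xK K k"
        unfolding xK_def by (simp only: sum_distrib_left)
    qed
    ultimately show "A (xK K) = (\<lambda>k. c * xK K k)" "xK K \<in> l2" by auto
  qed
  have Dl2: "D K \<in> l2" for K unfolding D_def by (rule l2_lin[OF x xKl2])
  have AD: "A (D K) m = A x m - c * xK K m" for K
    unfolding D_def using A_lin[OF A x xKl2, of 1 "-1"] AxK by simp
  have De: "D K k = (if k < K then 0 else x k)" for K k unfolding D_def xKe by simp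
  have limD: "(\<lambda>K. \<Sum>k. (cmod (D K k))^2) \<longlonglongrightarrow> 0"
  proof -
    have "eventually (\<lambda>K. summable (\<lambda>k. norm ((cmod (D K k))^2))) sequentially \<and>
        summable (\<lambda>k. norm ((\<lambda>k. 0::real) k)) \<and>
        ((\<lambda>K. \<Sum>k. (cmod (D K k))^2) \<longlonglongrightarrow> (\<Sum>k. (0::real)))"
    proof (rule tannerys_theorem[where M = "\<lambda>k. (cmod (x k))^2"])
      fix k
      show "(\<lambda>K. (cmod (D K k))^2) \<longlonglongrightarrow> 0"
      proof (rule tendsto_eventually)
        show "eventually (\<lambda>K. (cmod (D K k))^2 = 0) sequentially"
          using eventually_gt_at_top[of k] by eventually_elim (simp add: De)
      qed
    next
      show "\<forall>\<^sub>F (k, K) in sequentially \<times>\<^sub>F sequentially. norm ((cmod (D K k))^2) \<le> (cmod (x k))^2"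
        by (rule always_eventually) (auto simp: De)
    qed (use x in \<open>auto simp: l2_def\<close>)
    then show ?thesis by simp
  qed
  have lim: "(\<lambda>K. A (D K) m) \<longlonglongrightarrow> 0" by (rule A_null[OF A Dl2 limD])
  have ev: "eventually (\<lambda>K. A x m - c * x m = A (D K) m) sequentially"
    using eventually_gt_at_top[of m] by eventually_elim (simp add: AD xKe)
  have "A x m - c * x m = 0" by (rule const_null[OF lim ev])
  then show "A x m = A (en 0) 0 * x m" unfolding c_def by simp
qed

theorem mainTheorem1:
  fixes A :: "(nat \<Rightarrow> complex) \<Rightarrow> (nat \<Rightarrow> complex)"
  assumes "bounded_op A"
  shows "(\<forall>\<Theta>. \<Theta> \<in> sets borel \<and> \<Theta> \<subseteq> {0..<2*pi} \<longrightarrow>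
            (\<forall>x\<in>l2. A (E_can \<Theta> x) = E_can \<Theta> (A x)))
         \<longleftrightarrow> (\<exists>c::complex. \<forall>x\<in>l2. A x = (\<lambda>n. c * x n))"
proof
  assume H: "\<forall>\<Theta>. \<Theta> \<in> sets borel \<and> \<Theta> \<subseteq> {0..<2*pi} \<longrightarrow> (\<forall>x\<in>l2. A (E_can \<Theta> x) = E_can \<Theta> (A x))"
  show "\<exists>c::complex. \<forall>x\<in>l2. A x = (\<lambda>n. c * x n)"
    using forward[OF assms H] by blast
next
  assume "\<exists>c::complex. \<forall>x\<in>l2. A x = (\<lambda>n. c * x n)"
  then obtain c where c: "\<forall>x\<in>l2. A x = (\<lambda>n. c * x n)" by blast
  show "\<forall>\<Theta>. \<Theta> \<in> sets borel \<and> \<Theta> \<subseteq> {0..<2*pi} \<longrightarrow> (\<forall>x\<in>l2. A (E_can \<Theta> x) = E_can \<Theta> (A x))"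
    using backward[OF c] by blast
qed

end
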